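(* Let $\mathcal{C},\mathcal{D}$ be fibration categories and $F\colon\mathcal{C}\rightleftarrows\mathcal{D}\colon G$ an adjoint pair ($F\dashv G$) of exact functors. If two morphisms $f,g\colon A\to GB$ are homotopic in $\mathcal{C}$, then their adjoint transposes $\overline{f},\overline{g}\colon FA\to B$ are homotopic in $\mathcal{D}$.
   Context: A fibration category is a category with wide subcategories of fibrations and weak equivalences such that: weak equivalences satisfy 2-out-of-6; isomorphisms are acyclic fibrations; pullbacks along fibrations exist and fibrations and acyclic fibrations are stable under pullback; there is a terminal object and all objects are fibrant; every map factors as a weak equivalence followed by a fibration. An exact functor preserves fibrations, acyclic fibrations, pullbacks along fibrations and the terminal object. Two morphisms are homotopic if they become equal in the homotopy category $\mathrm{Ho}\,\mathcal{C}$ (the localization at the weak equivalences). *)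

theory Defs
  imports Main
begin

text \<open>A (small) category presented by its set of objects, its set of arrows,
  domain, codomain, identities and composition (cComp C g f = g o f),
  together with distinguished sets of fibrations and weak equivalences.\<close>

record ('o, 'a) fcat =
  cObj  :: "'o set"
  cArr  :: "'a set"
  cDom  :: "'a \<Rightarrow> 'o"
  cCod  :: "'a \<Rightarrow> 'o"
  cId   :: "'o \<Rightarrow> 'a"
  cComp :: "'a \<Rightarrow> 'a \<Rightarrow> 'a"
  cFib  :: "'a set"
  cWe   :: "'a set"

definition hom :: "('o, 'a) fcat \<Rightarrow> 'o \<Rightarrow> 'o \<Rightarrow> 'a set" where
  "hom C X Y = {f \<in> cArr C. cDom C f = X \<and> cCod C f = Y}"

definition category :: "('o, 'a) fcat \<Rightarrow> bool" where
  "category C \<longleftrightarrow>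
     (\<forall>f\<in>cArr C. cDom C f \<in> cObj C \<and> cCod C f \<in> cObj C) \<and>
     (\<forall>X\<in>cObj C. cId C X \<in> hom C X X) \<and>
     (\<forall>f\<in>cArr C. \<forall>g\<in>cArr C. cCod C f = cDom C g \<longrightarrow>
         cComp C g f \<in> hom C (cDom C f) (cCod C g)) \<and>
     (\<forall>f\<in>cArr C. cComp C f (cId C (cDom C f)) = f \<and> cComp C (cId C (cCod C f)) f = f) \<and>
     (\<forall>f\<in>cArr C. \<forall>g\<in>cArr C. \<forall>h\<in>cArr C.
         cCod C f = cDom C g \<longrightarrow> cCod C g = cDom C h \<longrightarrow>
         cComp C h (cComp C g f) = cComp C (cComp C h g) f)"

definition iso :: "('o, 'a) fcat \<Rightarrow> 'a \<Rightarrow> bool" where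
  "iso C f \<longleftrightarrow> f \<in> cArr C \<and>
     (\<exists>g\<in>hom C (cCod C f) (cDom C f).
        cComp C g f = cId C (cDom C f) \<and> cComp C f g = cId C (cCod C f))"

definition terminal :: "('o, 'a) fcat \<Rightarrow> 'o \<Rightarrow> bool" where
  "terminal C T \<longleftrightarrow> T \<in> cObj C \<and> (\<forall>X\<in>cObj C. \<exists>!t. t \<in> hom C X T)"

text \<open>Pullback square
\<open>P --f'--> E\<close>, \<open>p' : P \<rightarrow> A\<close>, \<open>p : E \<rightarrow> B\<close>, \<open>f : A \<rightarrow> B\<close>, with \<open>p o f' = f o p'\<close>;
  \<open>p'\<close> is the pullback of \<open>p\<close> along \<open>f\<close>.\<close>

definition is_pullback :: "('o, 'a) fcat \<Rightarrow> 'a \<Rightarrow> 'a \<Rightarrow> 'a \<Rightarrow> 'a \<Rightarrow> bool" where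
  "is_pullback C p f p' f' \<longleftrightarrow>
     p \<in> cArr C \<and> f \<in> cArr C \<and> p' \<in> cArr C \<and> f' \<in> cArr C \<and>
     cCod C f = cCod C p \<and> cDom C p' = cDom C f' \<and>
     cCod C p' = cDom C f \<and> cCod C f' = cDom C p \<and>
     cComp C p f' = cComp C f p' \<and>
     (\<forall>Q a e. a \<in> hom C Q (cDom C f) \<and> e \<in> hom C Q (cDom C p) \<and>
        cComp C f a = cComp C p e \<longrightarrow>
        (\<exists>!u. u \<in> hom C Q (cDom C p') \<and> cComp C p' u = a \<and> cComp C f' u = e))"

definition fibration_category :: "('o, 'a) fcat \<Rightarrow> bool" where
  "fibration_category C \<longleftrightarrow>
     category C \<and>
     \<comment> \<open>fibrations and weak equivalences form wide subcategories\<close>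
     cFib C \<subseteq> cArr C \<and> cWe C \<subseteq> cArr C \<and>
     (\<forall>X\<in>cObj C. cId C X \<in> cFib C \<and> cId C X \<in> cWe C) \<and>
     (\<forall>f\<in>cFib C. \<forall>g\<in>cFib C. cCod C f = cDom C g \<longrightarrow> cComp C g f \<in> cFib C) \<and>
     (\<forall>f\<in>cWe C. \<forall>g\<in>cWe C. cCod C f = cDom C g \<longrightarrow> cComp C g f \<in> cWe C) \<and>
     \<comment> \<open>2-out-of-6\<close>
     (\<forall>f\<in>cArr C. \<forall>g\<in>cArr C. \<forall>h\<in>cArr C.
        cCod C f = cDom C g \<and> cCod C g = cDom C h \<and>
        cComp C g f \<in> cWe C \<and> cComp C h g \<in> cWe C \<longrightarrow>
        f \<in> cWe C \<and> g \<in> cWe C \<and> h \<in> cWe C \<and> cComp C h (cComp C g f) \<in> cWe C) \<and>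
     \<comment> \<open>isomorphisms are acyclic fibrations\<close>
     (\<forall>f. iso C f \<longrightarrow> f \<in> cFib C \<and> f \<in> cWe C) \<and>
     \<comment> \<open>pullbacks along fibrations exist\<close>
     (\<forall>p\<in>cFib C. \<forall>f\<in>cArr C. cCod C f = cCod C p \<longrightarrow> (\<exists>p' f'. is_pullback C p f p' f')) \<and>
     \<comment> \<open>fibrations and acyclic fibrations are stable under pullback\<close>
     (\<forall>p f p' f'. is_pullback C p f p' f' \<and> p \<in> cFib C \<longrightarrow>
        p' \<in> cFib C \<and> (p \<in> cWe C \<longrightarrow> p' \<in> cWe C)) \<and>
     \<comment> \<open>terminal object, all objects fibrant\<close>
     (\<exists>T. terminal C T \<and> (\<forall>X\<in>cObj C. \<forall>t\<in>hom C X T. t \<in> cFib C)) \<and>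
     \<comment> \<open>factorization: weak equivalence followed by fibration\<close>
     (\<forall>f\<in>cArr C. \<exists>w p. w \<in> cWe C \<and> p \<in> cFib C \<and> cCod C w = cDom C p \<and> cComp C p w = f)"

definition is_functor :: "('o, 'a) fcat \<Rightarrow> ('p, 'b) fcat \<Rightarrow> ('o \<Rightarrow> 'p) \<Rightarrow> ('a \<Rightarrow> 'b) \<Rightarrow> bool" where
  "is_functor C D FO FA \<longleftrightarrow>
     (\<forall>X\<in>cObj C. FO X \<in> cObj D) \<and>
     (\<forall>f\<in>cArr C. FA f \<in> hom D (FO (cDom C f)) (FO (cCod C f))) \<and>
     (\<forall>X\<in>cObj C. FA (cId C X) = cId D (FO X)) \<and>
     (\<forall>f\<in>cArr C. \<forall>g\<in>cArr C. cCod C f = cDom C g \<longrightarrow>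
        FA (cComp C g f) = cComp D (FA g) (FA f))"

definition exact_functor :: "('o, 'a) fcat \<Rightarrow> ('p, 'b) fcat \<Rightarrow> ('o \<Rightarrow> 'p) \<Rightarrow> ('a \<Rightarrow> 'b) \<Rightarrow> bool" where
  "exact_functor C D FO FA \<longleftrightarrow>
     is_functor C D FO FA \<and>
     (\<forall>p\<in>cFib C. FA p \<in> cFib D) \<and>
     (\<forall>p\<in>cFib C \<inter> cWe C. FA p \<in> cFib D \<inter> cWe D) \<and>
     (\<forall>p f p' f'. is_pullback C p f p' f' \<and> p \<in> cFib C \<longrightarrow>
        is_pullback D (FA p) (FA f) (FA p') (FA f')) \<and>
     (\<forall>T. terminal C T \<longrightarrow> terminal D (FO T))"

definition adjunction ::
  "('o, 'a) fcat \<Rightarrow> ('p, 'b) fcat \<Rightarrow> ('o \<Rightarrow> 'p) \<Rightarrow> ('a \<Rightarrow> 'b) \<Rightarrow> ('p \<Rightarrow> 'o) \<Rightarrow> ('b \<Rightarrow> 'a)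
     \<Rightarrow> ('o \<Rightarrow> 'p \<Rightarrow> 'b \<Rightarrow> 'a) \<Rightarrow> bool" where
  "adjunction C D FO FA GO GA phi \<longleftrightarrow>
     is_functor C D FO FA \<and> is_functor D C GO GA \<and>
     (\<forall>A\<in>cObj C. \<forall>B\<in>cObj D. bij_betw (phi A B) (hom D (FO A) B) (hom C A (GO B))) \<and>
     (\<forall>A A' B B' h k g. h \<in> hom C A' A \<and> k \<in> hom D B B' \<and> g \<in> hom D (FO A) B \<longrightarrow>
        phi A' B' (cComp D k (cComp D g (FA h))) = cComp C (GA k) (cComp C (phi A B g) h))"

text \<open>Morphisms of the localization are zigzags modulo the congruence generated by
  composition, identities and the invertibility of weak equivalences.
  A step \<open>Inl f\<close> is a forward arrow f, a step \<open>Inr w\<close> the formal inverse of w.\<close>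

fun step_src :: "('o, 'a) fcat \<Rightarrow> 'a + 'a \<Rightarrow> 'o" where
  "step_src C (Inl f) = cDom C f"
| "step_src C (Inr w) = cCod C w"

fun step_tgt :: "('o, 'a) fcat \<Rightarrow> 'a + 'a \<Rightarrow> 'o" where
  "step_tgt C (Inl f) = cCod C f"
| "step_tgt C (Inr w) = cDom C w"

fun step_ok :: "('o, 'a) fcat \<Rightarrow> 'a + 'a \<Rightarrow> bool" where
  "step_ok C (Inl f) = (f \<in> cArr C)"
| "step_ok C (Inr w) = (w \<in> cWe C)"

fun zz_path :: "('o, 'a) fcat \<Rightarrow> 'o \<Rightarrow> 'o \<Rightarrow> ('a + 'a) list \<Rightarrow> bool" where
  "zz_path C X Y [] = (X = Y \<and> X \<in> cObj C)"
| "zz_path C X Y (s # xs) = (step_ok C s \<and> step_src C s = X \<and> zz_path C (step_tgt C s) Y xs)"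

inductive zz_rel :: "('o, 'a) fcat \<Rightarrow> 'o \<Rightarrow> 'o \<Rightarrow> ('a + 'a) list \<Rightarrow> ('a + 'a) list \<Rightarrow> bool"
  for C where
  zz_comp: "\<lbrakk>f \<in> cArr C; g \<in> cArr C; cCod C f = cDom C g\<rbrakk> \<Longrightarrow>
     zz_rel C (cDom C f) (cCod C g) [Inl f, Inl g] [Inl (cComp C g f)]"
| zz_ident: "X \<in> cObj C \<Longrightarrow> zz_rel C X X [Inl (cId C X)] []"
| zz_linv: "w \<in> cWe C \<Longrightarrow> zz_rel C (cDom C w) (cDom C w) [Inl w, Inr w] []"
| zz_rinv: "w \<in> cWe C \<Longrightarrow> zz_rel C (cCod C w) (cCod C w) [Inr w, Inl w] []"
| zz_ctx: "\<lbrakk>zz_rel C X Y p q; zz_path C U X r; zz_path C Y V s\<rbrakk> \<Longrightarrow>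
     zz_rel C U V (r @ p @ s) (r @ q @ s)"
| zz_refl: "zz_path C X Y p \<Longrightarrow> zz_rel C X Y p p"
| zz_sym: "zz_rel C X Y p q \<Longrightarrow> zz_rel C X Y q p"
| zz_trans: "\<lbrakk>zz_rel C X Y p q; zz_rel C X Y q r\<rbrakk> \<Longrightarrow> zz_rel C X Y p r"

text \<open>Two parallel morphisms are homotopic iff they become equal in \<open>Ho C\<close>.\<close>

definition homotopic :: "('o, 'a) fcat \<Rightarrow> 'a \<Rightarrow> 'a \<Rightarrow> bool" where
  "homotopic C f g \<longleftrightarrow> f \<in> cArr C \<and> g \<in> cArr C \<and>
     cDom C f = cDom C g \<and> cCod C f = cCod C g \<and>
     zz_rel C (cDom C f) (cCod C f) [Inl f] [Inl g]"

end

theory Submission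
  imports Defs
begin

lemma fc_cat:
  assumes "fibration_category C"
  shows "category C"
  using assms unfolding fibration_category_def by (elim conjE) assumption

lemma fc_sub:
  assumes "fibration_category C"
  shows "cFib C \<subseteq> cArr C \<and> cWe C \<subseteq> cArr C"
  using assms unfolding fibration_category_def by (elim conjE) (intro conjI; assumption)

lemma fc_idfw:
  assumes "fibration_category C"
  shows "\<forall>X\<in>cObj C. cId C X \<in> cFib C \<and> cId C X \<in> cWe C"
  using assms unfolding fibration_category_def by (elim conjE) assumption

lemma fc_fibc:
  assumes "fibration_category C"
  shows "\<forall>f\<in>cFib C. \<forall>g\<in>cFib C. cCod C f = cDom C g \<longrightarrow> cComp C g f \<in> cFib C"
  using assms unfolding fibration_category_def by (elim conjE) assumption

lemma fc_wec:
  assumes "fibration_category C"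
  shows "\<forall>f\<in>cWe C. \<forall>g\<in>cWe C. cCod C f = cDom C g \<longrightarrow> cComp C g f \<in> cWe C"
  using assms unfolding fibration_category_def by (elim conjE) assumption

lemma fc_six:
  assumes "fibration_category C"
  shows "\<forall>f\<in>cArr C. \<forall>g\<in>cArr C. \<forall>h\<in>cArr C.
        cCod C f = cDom C g \<and> cCod C g = cDom C h \<and>
        cComp C g f \<in> cWe C \<and> cComp C h g \<in> cWe C \<longrightarrow>
        f \<in> cWe C \<and> g \<in> cWe C \<and> h \<in> cWe C \<and> cComp C h (cComp C g f) \<in> cWe C"
  using assms unfolding fibration_category_def by (elim conjE) assumption

lemma fc_pbex:
  assumes "fibration_category C"
  shows "\<forall>p\<in>cFib C. \<forall>f\<in>cArr C. cCod C f = cCod C p \<longrightarrow> (\<exists>p' f'. is_pullback C p f p' f')"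
  using assms unfolding fibration_category_def by (elim conjE) assumption

lemma fc_stab:
  assumes "fibration_category C"
  shows "\<forall>p f p' f'. is_pullback C p f p' f' \<and> p \<in> cFib C \<longrightarrow>
        p' \<in> cFib C \<and> (p \<in> cWe C \<longrightarrow> p' \<in> cWe C)"
  using assms unfolding fibration_category_def by (elim conjE) assumption

lemma fc_term:
  assumes "fibration_category C"
  shows "\<exists>T. terminal C T \<and> (\<forall>X\<in>cObj C. \<forall>t\<in>hom C X T. t \<in> cFib C)"
  using assms unfolding fibration_category_def by (elim conjE) assumption

lemma fc_fact:
  assumes "fibration_category C"
  shows "\<forall>f\<in>cArr C. \<exists>w p. w \<in> cWe C \<and> p \<in> cFib C \<and> cCod C w = cDom C p \<and> cComp C p w = f"
  using assms unfolding fibration_category_def by (elim conjE) assumption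

lemma cat_comp:
  assumes "category C" "f \<in> cArr C" "g \<in> cArr C" "cCod C f = cDom C g"
  shows "cComp C g f \<in> cArr C \<and> cDom C (cComp C g f) = cDom C f \<and> cCod C (cComp C g f) = cCod C g"
  using assms unfolding category_def hom_def by blast

lemma cat_id:
  assumes "category C" "X \<in> cObj C"
  shows "cId C X \<in> cArr C \<and> cDom C (cId C X) = X \<and> cCod C (cId C X) = X"
  using assms unfolding category_def hom_def by blast

lemma cat_idl:
  assumes "category C" "f \<in> cArr C"
  shows "cComp C (cId C (cCod C f)) f = f" "cComp C f (cId C (cDom C f)) = f"
  using assms unfolding category_def by blast+

lemma cat_assoc:
  assumes "category C" "f \<in> cArr C" "g \<in> cArr C" "h \<in> cArr C"
    "cCod C f = cDom C g" "cCod C g = cDom C h"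
  shows "cComp C h (cComp C g f) = cComp C (cComp C h g) f"
  using assms unfolding category_def by blast

lemma cat_obj:
  assumes "category C" "f \<in> cArr C"
  shows "cDom C f \<in> cObj C" "cCod C f \<in> cObj C"
  using assms unfolding category_def by blast+

lemma two3_left:
  assumes FC: "fibration_category C" and "f \<in> cArr C" "g \<in> cArr C" "cCod C f = cDom C g"
    and "cComp C g f \<in> cWe C" and "f \<in> cWe C"
  shows "g \<in> cWe C"
proof -
  have cat: "category C" using fc_cat[OF FC] by blast
  have X: "cDom C f \<in> cObj C" using cat_obj[OF cat] assms by blast
  have i: "cId C (cDom C f) \<in> cArr C \<and> cDom C (cId C (cDom C f)) = cDom C f \<and> cCod C (cId C (cDom C f)) = cDom C f"
    using cat_id[OF cat X] .
  have e: "cComp C f (cId C (cDom C f)) = f" using cat_idl[OF cat \<open>f \<in> cArr C\<close>] by blast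
  have t: "\<forall>f\<in>cArr C. \<forall>g\<in>cArr C. \<forall>h\<in>cArr C.
        cCod C f = cDom C g \<and> cCod C g = cDom C h \<and>
        cComp C g f \<in> cWe C \<and> cComp C h g \<in> cWe C \<longrightarrow>
        f \<in> cWe C \<and> g \<in> cWe C \<and> h \<in> cWe C \<and> cComp C h (cComp C g f) \<in> cWe C"
    using fc_six[OF FC] by blast
  show ?thesis using t[rule_format, of "cId C (cDom C f)" f g] i e assms by auto
qed

lemma two3_right:
  assumes FC: "fibration_category C" and "f \<in> cArr C" "g \<in> cArr C" "cCod C f = cDom C g"
    and "cComp C g f \<in> cWe C" and "g \<in> cWe C"
  shows "f \<in> cWe C"
proof -
  have cat: "category C" using fc_cat[OF FC] by blast
  have X: "cCod C g \<in> cObj C" using cat_obj[OF cat] assms by blast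
  have i: "cId C (cCod C g) \<in> cArr C \<and> cDom C (cId C (cCod C g)) = cCod C g \<and> cCod C (cId C (cCod C g)) = cCod C g"
    using cat_id[OF cat X] .
  have e: "cComp C (cId C (cCod C g)) g = g" using cat_idl[OF cat \<open>g \<in> cArr C\<close>] by blast
  have t: "\<forall>f\<in>cArr C. \<forall>g\<in>cArr C. \<forall>h\<in>cArr C.
        cCod C f = cDom C g \<and> cCod C g = cDom C h \<and>
        cComp C g f \<in> cWe C \<and> cComp C h g \<in> cWe C \<longrightarrow>
        f \<in> cWe C \<and> g \<in> cWe C \<and> h \<in> cWe C \<and> cComp C h (cComp C g f) \<in> cWe C"
    using fc_six[OF FC] by blast
  show ?thesis using t[rule_format, of f g "cId C (cCod C g)"] i e assms by auto
qed

lemma pb_sym: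
  assumes "is_pullback C p f p' f'"
  shows "is_pullback C f p f' p'"
proof -
  have u: "\<forall>Q a e. a \<in> hom C Q (cDom C f) \<and> e \<in> hom C Q (cDom C p) \<and>
        cComp C f a = cComp C p e \<longrightarrow>
        (\<exists>!u. u \<in> hom C Q (cDom C p') \<and> cComp C p' u = a \<and> cComp C f' u = e)"
    using assms unfolding is_pullback_def by blast
  have u2: "\<forall>Q a e. a \<in> hom C Q (cDom C p) \<and> e \<in> hom C Q (cDom C f) \<and>
        cComp C p a = cComp C f e \<longrightarrow>
        (\<exists>!u. u \<in> hom C Q (cDom C f') \<and> cComp C f' u = a \<and> cComp C p' u = e)"
  proof (intro allI impI)
    fix Q a e assume h: "a \<in> hom C Q (cDom C p) \<and> e \<in> hom C Q (cDom C f) \<and> cComp C p a = cComp C f e"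
    have dd: "cDom C p' = cDom C f'" using assms unfolding is_pullback_def by blast
    from u[rule_format, of e Q a] h dd
    show "\<exists>!u. u \<in> hom C Q (cDom C f') \<and> cComp C f' u = a \<and> cComp C p' u = e" by auto
  qed
  show ?thesis using assms u2 unfolding is_pullback_def by metis
qed

lemma ken_brown:
  assumes FC: "fibration_category C" and w: "w \<in> cWe C"
  shows "\<exists>j q1 q2. j \<in> cWe C \<and> j \<in> cArr C \<and> q1 \<in> cFib C \<and> q1 \<in> cWe C \<and> q1 \<in> cArr C
     \<and> q2 \<in> cFib C \<and> q2 \<in> cWe C \<and> q2 \<in> cArr C
     \<and> cDom C j = cDom C w \<and> cCod C j = cDom C q1 \<and> cCod C j = cDom C q2
     \<and> cComp C q1 j = cId C (cDom C w) \<and> cComp C q2 j = w"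
proof -
  have cat: "category C" using fc_cat[OF FC] by blast
  have sub: "cFib C \<subseteq> cArr C" "cWe C \<subseteq> cArr C" using fc_sub[OF FC] by blast+
  have wa: "w \<in> cArr C" using w sub by blast
  define X where "X = cDom C w"
  define Y where "Y = cCod C w"
  have XO: "X \<in> cObj C" "Y \<in> cObj C" using cat_obj[OF cat wa] X_def Y_def by auto
  obtain T where T: "terminal C T" and Tf: "\<forall>X\<in>cObj C. \<forall>t\<in>hom C X T. t \<in> cFib C"
    using fc_term[OF FC] by blast
  obtain tX where tX: "tX \<in> hom C X T" using T XO unfolding terminal_def by auto
  obtain tY where tY: "tY \<in> hom C Y T" using T XO unfolding terminal_def by auto
  have tXf: "tX \<in> cFib C" and tYf: "tY \<in> cFib C" using Tf tX tY XO by auto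
  have pbex: "\<forall>p\<in>cFib C. \<forall>f\<in>cArr C. cCod C f = cCod C p \<longrightarrow> (\<exists>p' f'. is_pullback C p f p' f')"
    using fc_pbex[OF FC] by blast
  obtain p' f' where pb: "is_pullback C tY tX p' f'"
    using pbex tYf tX tY unfolding hom_def by force
  have stab: "\<forall>p f p' f'. is_pullback C p f p' f' \<and> p \<in> cFib C \<longrightarrow>
        p' \<in> cFib C \<and> (p \<in> cWe C \<longrightarrow> p' \<in> cWe C)"
    using fc_stab[OF FC] by blast
  have p'f: "p' \<in> cFib C" using stab pb tYf by blast
  have f'f: "f' \<in> cFib C" using stab pb_sym[OF pb] tXf by blast
  have pbraw: "p' \<in> cArr C \<and> f' \<in> cArr C \<and> cDom C p' = cDom C f' \<and> cCod C p' = cDom C tX \<and> cCod C f' = cDom C tY"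
    using pb unfolding is_pullback_def by blast
  have tXd: "cDom C tX = X" and tYd: "cDom C tY = Y" using tX tY unfolding hom_def by auto
  have pbfacts: "p' \<in> cArr C" "f' \<in> cArr C" "cDom C p' = cDom C f'" "cCod C p' = X" "cCod C f' = Y"
    using pbraw tXd tYd by auto
  have univ: "\<forall>Q a e. a \<in> hom C Q (cDom C tX) \<and> e \<in> hom C Q (cDom C tY) \<and>
        cComp C tX a = cComp C tY e \<longrightarrow>
        (\<exists>!u. u \<in> hom C Q (cDom C p') \<and> cComp C p' u = a \<and> cComp C f' u = e)"
    using pb unfolding is_pullback_def by blast
  have idX: "cId C X \<in> cArr C \<and> cDom C (cId C X) = X \<and> cCod C (cId C X) = X" using cat_id[OF cat XO(1)] .
  have eq1: "cComp C tX (cId C X) = tX" using cat_idl[of C tX] cat tX unfolding hom_def by auto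
  have c2: "cComp C tY w \<in> hom C X T" using cat_comp[OF cat wa, of tY] tY X_def Y_def unfolding hom_def by auto
  have eq2: "cComp C tY w = tX" using T XO c2 tX unfolding terminal_def by blast
  have a1: "cId C X \<in> hom C X (cDom C tX)" using idX tXd unfolding hom_def by auto
  have a2: "w \<in> hom C X (cDom C tY)" using wa tYd X_def Y_def unfolding hom_def by auto
  have a3: "cComp C tX (cId C X) = cComp C tY w" using eq1 eq2 by simp
  have ex1: "\<exists>!u. u \<in> hom C X (cDom C p') \<and> cComp C p' u = cId C X \<and> cComp C f' u = w"
    using univ a1 a2 a3 by blast
  obtain u where u: "u \<in> hom C X (cDom C p')" "cComp C p' u = cId C X" "cComp C f' u = w"
    using ex1 by blast
  have ua: "u \<in> cArr C" using u unfolding hom_def by blast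
  have fact: "\<forall>f\<in>cArr C. \<exists>w p. w \<in> cWe C \<and> p \<in> cFib C \<and> cCod C w = cDom C p \<and> cComp C p w = f"
    using fc_fact[OF FC] by blast
  obtain j q where jq: "j \<in> cWe C" "q \<in> cFib C" "cCod C j = cDom C q" "cComp C q j = u"
    using fact ua by blast
  have ja: "j \<in> cArr C" and qa: "q \<in> cArr C" using jq sub by auto
  have jd: "cDom C j = X" and qc: "cCod C q = cDom C p'"
    using cat_comp[OF cat ja qa jq(3)] jq(4) u(1) unfolding hom_def by auto
  have fibc: "\<forall>f\<in>cFib C. \<forall>g\<in>cFib C. cCod C f = cDom C g \<longrightarrow> cComp C g f \<in> cFib C"
    using fc_fibc[OF FC] by blast
  define q1 where "q1 = cComp C p' q"
  define q2 where "q2 = cComp C f' q"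
  have q1f: "q1 \<in> cFib C" using fibc jq(2) p'f qc q1_def by blast
  have q2f: "q2 \<in> cFib C" using fibc jq(2) f'f qc pbfacts(3) q2_def by simp
  have q1c: "q1 \<in> cArr C \<and> cDom C q1 = cDom C q" using cat_comp[OF cat qa pbfacts(1)] qc q1_def by auto
  have q2c: "q2 \<in> cArr C \<and> cDom C q2 = cDom C q" using cat_comp[OF cat qa pbfacts(2)] qc pbfacts q2_def by auto
  have e1: "cComp C q1 j = cId C X"
    using cat_assoc[OF cat ja qa pbfacts(1) jq(3) qc] jq(4) u(2) q1_def by simp
  have e2: "cComp C q2 j = w"
    using cat_assoc[OF cat ja qa pbfacts(2) jq(3)] qc pbfacts jq(4) u(3) q2_def by simp
  have idwe: "cId C X \<in> cWe C" using fc_idfw[OF FC] XO by blast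
  have q1w: "q1 \<in> cWe C" using two3_left[OF FC ja, of q1] q1c jq e1 idwe by auto
  have q2w: "q2 \<in> cWe C" using two3_left[OF FC ja, of q2] q2c jq e2 w by auto
  show ?thesis
    apply (rule exI[of _ j], rule exI[of _ q1], rule exI[of _ q2])
    using jq ja q1f q1w q1c q2f q2w q2c jd e1 e2 X_def by auto
qed

lemma exact_we:
  assumes FC: "fibration_category C" and FD: "fibration_category D"
    and E: "exact_functor C D FO FA" and w: "w \<in> cWe C"
  shows "FA w \<in> cWe D"
proof -
  obtain j q1 q2 where k: "j \<in> cWe C \<and> j \<in> cArr C \<and> q1 \<in> cFib C \<and> q1 \<in> cWe C \<and> q1 \<in> cArr C
     \<and> q2 \<in> cFib C \<and> q2 \<in> cWe C \<and> q2 \<in> cArr C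
     \<and> cDom C j = cDom C w \<and> cCod C j = cDom C q1 \<and> cCod C j = cDom C q2
     \<and> cComp C q1 j = cId C (cDom C w) \<and> cComp C q2 j = w"
    using ken_brown[OF FC w] by blast
  have F: "is_functor C D FO FA" and af: "\<forall>p\<in>cFib C \<inter> cWe C. FA p \<in> cFib D \<inter> cWe D"
    using E unfolding exact_functor_def by blast+
  have cat: "category C" using fc_cat[OF FC] by blast
  have wa: "w \<in> cArr C" using w fc_sub[OF FC] by blast
  have Xo: "cDom C w \<in> cObj C" using cat_obj[OF cat wa] by blast
  have fh: "\<forall>f\<in>cArr C. FA f \<in> hom D (FO (cDom C f)) (FO (cCod C f))"
    and fid: "\<forall>X\<in>cObj C. FA (cId C X) = cId D (FO X)"
    and fc: "\<forall>f\<in>cArr C. \<forall>g\<in>cArr C. cCod C f = cDom C g \<longrightarrow> FA (cComp C g f) = cComp D (FA g) (FA f)"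
    using F unfolding is_functor_def by blast+
  have Fq1: "FA q1 \<in> cWe D" "FA q2 \<in> cWe D" using af k by auto
  have e1: "cComp D (FA q1) (FA j) = cId D (FO (cDom C w))"
    using fc[rule_format, of j q1] k fid Xo by simp
  have e2': "FA (cComp C q2 j) = cComp D (FA q2) (FA j)" using fc k by blast
  have e2: "cComp D (FA q2) (FA j) = FA w" using e2' k by metis
  have hj: "FA j \<in> cArr D" "FA q1 \<in> cArr D" "FA q2 \<in> cArr D"
    "cCod D (FA j) = cDom D (FA q1)" "cCod D (FA j) = cDom D (FA q2)"
    using fh k unfolding hom_def by auto
  have Do: "FO (cDom C w) \<in> cObj D" using F Xo unfolding is_functor_def by blast
  have idwe: "cId D (FO (cDom C w)) \<in> cWe D" using fc_idfw[OF FD] Do by blast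
  have jw: "FA j \<in> cWe D" using two3_right[OF FD hj(1) hj(2) hj(4)] e1 idwe Fq1 by simp
  have wec: "\<forall>f\<in>cWe D. \<forall>g\<in>cWe D. cCod D f = cDom D g \<longrightarrow> cComp D g f \<in> cWe D"
    using fc_wec[OF FD] by blast
  show ?thesis using wec[rule_format, OF jw Fq1(2) hj(5)] e2 by simp
qed

lemma functor_arr:
  assumes "is_functor C D FO FA" "f \<in> cArr C"
  shows "FA f \<in> cArr D" "cDom D (FA f) = FO (cDom C f)" "cCod D (FA f) = FO (cCod C f)"
  using assms unfolding is_functor_def hom_def by blast+

lemma zz_path_map:
  assumes F: "is_functor C D FO FA" and W: "\<forall>w\<in>cWe C. FA w \<in> cWe D" and S: "cWe C \<subseteq> cArr C"
  shows "zz_path C X Y p \<Longrightarrow> zz_path D (FO X) (FO Y) (map (map_sum FA FA) p)"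
proof (induction p arbitrary: X)
  case Nil
  then show ?case using F unfolding is_functor_def by auto
next
  case (Cons s p)
  show ?case
  proof (cases s)
    case (Inl f)
    then show ?thesis using Cons functor_arr[OF F, of f] by auto
  next
    case (Inr w)
    then have "w \<in> cArr C" using Cons S by auto
    then show ?thesis using Cons Inr functor_arr[OF F, of w] W by auto
  qed
qed

lemma zz_rel_map:
  assumes F: "is_functor C D FO FA" and W: "\<forall>w\<in>cWe C. FA w \<in> cWe D" and S: "cWe C \<subseteq> cArr C"
  shows "zz_rel C X Y p q \<Longrightarrow> zz_rel D (FO X) (FO Y) (map (map_sum FA FA) p) (map (map_sum FA FA) q)"
proof (induction rule: zz_rel.induct)
  case (zz_comp f g)
  have e: "FA (cComp C g f) = cComp D (FA g) (FA f)" using F zz_comp unfolding is_functor_def by blast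
  have r: "zz_rel D (cDom D (FA f)) (cCod D (FA g)) [Inl (FA f), Inl (FA g)] [Inl (cComp D (FA g) (FA f))]"
    by (rule zz_rel.zz_comp) (use zz_comp functor_arr[OF F] in auto)
  then show ?case using e functor_arr[OF F] zz_comp by auto
next
  case (zz_ident X)
  have e: "FA (cId C X) = cId D (FO X)" "FO X \<in> cObj D" using F zz_ident unfolding is_functor_def by blast+
  show ?case using zz_rel.zz_ident[OF e(2)] e(1) by simp
next
  case (zz_linv w)
  have wa: "w \<in> cArr C" using S zz_linv by blast
  show ?case using zz_rel.zz_linv[of "FA w" D] W zz_linv functor_arr[OF F wa] by simp
next
  case (zz_rinv w)
  have wa: "w \<in> cArr C" using S zz_rinv by blast
  show ?case using zz_rel.zz_rinv[of "FA w" D] W zz_rinv functor_arr[OF F wa] by simp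
next
  case (zz_ctx X Y p q U r V s)
  show ?case using zz_rel.zz_ctx[OF zz_ctx.IH zz_path_map[OF F W S zz_ctx.hyps(2)] zz_path_map[OF F W S zz_ctx.hyps(3)]]
    by simp
next
  case (zz_refl X Y p)
  then show ?case by (intro zz_rel.zz_refl zz_path_map[OF F W S])
next
  case (zz_sym X Y p q)
  show ?case by (rule zz_rel.zz_sym[OF zz_sym.IH])
next
  case (zz_trans X Y p q r)
  show ?case by (rule zz_rel.zz_trans[OF zz_trans.IH(1) zz_trans.IH(2)])
qed

theorem lemma4p4:
  fixes C :: "('o, 'a) fcat" and D :: "('p, 'b) fcat"
    and FO :: "'o \<Rightarrow> 'p" and FA :: "'a \<Rightarrow> 'b"
    and GO :: "'p \<Rightarrow> 'o" and GA :: "'b \<Rightarrow> 'a"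
    and phi :: "'o \<Rightarrow> 'p \<Rightarrow> 'b \<Rightarrow> 'a"
  assumes "fibration_category C" and "fibration_category D"
    and "exact_functor C D FO FA" and "exact_functor D C GO GA"
    and "adjunction C D FO FA GO GA phi"
    and "A \<in> cObj C" and "B \<in> cObj D"
    and "f \<in> hom C A (GO B)" and "g \<in> hom C A (GO B)"
    and "homotopic C f g"
    and "fbar \<in> hom D (FO A) B" and "phi A B fbar = f"
    and "gbar \<in> hom D (FO A) B" and "phi A B gbar = g"
  shows "homotopic D fbar gbar"
proof -
  note FC = assms(1) and FD = assms(2)
  have F: "is_functor C D FO FA" using assms(3) unfolding exact_functor_def by (elim conjE)
  have G: "is_functor D C GO GA" using assms(5) unfolding adjunction_def by (elim conjE)
  have W: "\<forall>w\<in>cWe C. FA w \<in> cWe D" using exact_we[OF FC FD assms(3)] by blast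
  have S: "cWe C \<subseteq> cArr C" using fc_sub[OF FC] by blast
  have catC: "category C" and catD: "category D" using fc_cat FC FD by auto
  have bij: "\<forall>A\<in>cObj C. \<forall>B\<in>cObj D. bij_betw (phi A B) (hom D (FO A) B) (hom C A (GO B))"
    using assms(5) unfolding adjunction_def by (elim conjE)
  have nat: "\<forall>A A' B B' h k g. h \<in> hom C A' A \<and> k \<in> hom D B B' \<and> g \<in> hom D (FO A) B \<longrightarrow>
        phi A' B' (cComp D k (cComp D g (FA h))) = cComp C (GA k) (cComp C (phi A B g) h)"
    using assms(5) unfolding adjunction_def by (elim conjE)
  have GB: "GO B \<in> cObj C" using G assms(7) unfolding is_functor_def by blast
  have FA_: "FO A \<in> cObj D" using F assms(6) unfolding is_functor_def by blast
  have idGB: "cId C (GO B) \<in> hom C (GO B) (GO B)" using cat_id[OF catC GB] unfolding hom_def by blast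
  have bGB: "bij_betw (phi (GO B) B) (hom D (FO (GO B)) B) (hom C (GO B) (GO B))" using bij GB assms(7) by blast
  have "cId C (GO B) \<in> phi (GO B) B ` hom D (FO (GO B)) B" using bGB idGB unfolding bij_betw_def by simp
  then obtain eps where eps: "eps \<in> hom D (FO (GO B)) B" "phi (GO B) B eps = cId C (GO B)"
    by (auto elim!: imageE)
  have idB: "cId D B \<in> hom D B B" using cat_id[OF catD assms(7)] unfolding hom_def by blast
  have GidB: "GA (cId D B) = cId C (GO B)" using G assms(7) unfolding is_functor_def by (elim conjE) blast
  have transp: "cComp D eps (FA h) = hbar"
    if h: "h \<in> hom C A (GO B)" and hb: "hbar \<in> hom D (FO A) B" and ph: "phi A B hbar = h" for h hbar
  proof -
    have ha: "h \<in> cArr C" using h unfolding hom_def by blast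
    have fh: "FA h \<in> hom D (FO A) (FO (GO B))" using functor_arr[OF F ha] h unfolding hom_def by auto
    have ea: "eps \<in> cArr D" using eps unfolding hom_def by blast
    have c: "cComp D eps (FA h) \<in> hom D (FO A) B"
      using cat_comp[OF catD, of "FA h" eps] fh eps unfolding hom_def by auto
    have c1: "cComp D (cId D B) (cComp D eps (FA h)) = cComp D eps (FA h)"
      using cat_idl(1)[OF catD, of "cComp D eps (FA h)"] c unfolding hom_def by auto
    have n: "phi A B (cComp D (cId D B) (cComp D eps (FA h))) = cComp C (GA (cId D B)) (cComp C (phi (GO B) B eps) h)"
      using nat[rule_format, of h A "GO B" "cId D B" B B eps] h idB eps by blast
    have "cComp C (cId C (GO B)) (cComp C (cId C (GO B)) h) = h"
      using cat_idl(1)[OF catC ha] h unfolding hom_def by auto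
    then have "phi A B (cComp D eps (FA h)) = h" using n c1 GidB eps by simp
    then have "phi A B (cComp D eps (FA h)) = phi A B hbar" using ph by simp
    moreover have "inj_on (phi A B) (hom D (FO A) B)" using bij assms(6,7) unfolding bij_betw_def by blast
    ultimately show ?thesis using c hb unfolding inj_on_def by blast
  qed
  have efb: "cComp D eps (FA f) = fbar" using transp assms(8,11,12) by blast
  have egb: "cComp D eps (FA g) = gbar" using transp assms(9,13,14) by blast
  have hfg: "zz_rel C A (GO B) [Inl f] [Inl g]"
    using assms(10,8) unfolding homotopic_def hom_def by auto
  have r1: "zz_rel D (FO A) (FO (GO B)) [Inl (FA f)] [Inl (FA g)]"
    using zz_rel_map[OF F W S hfg] by simp
  have ea: "eps \<in> cArr D" and ed: "cDom D eps = FO (GO B)" and ec: "cCod D eps = B"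
    using eps unfolding hom_def by auto
  have fa: "f \<in> cArr C" "g \<in> cArr C" using assms(8,9) unfolding hom_def by auto
  have ff: "FA f \<in> cArr D" "cDom D (FA f) = FO A" "cCod D (FA f) = FO (GO B)"
    "FA g \<in> cArr D" "cDom D (FA g) = FO A" "cCod D (FA g) = FO (GO B)"
    using functor_arr[OF F fa(1)] functor_arr[OF F fa(2)] assms(8,9) unfolding hom_def by auto
  have p0: "zz_path D (FO A) (FO A) []" using FA_ by simp
  have p1: "zz_path D (FO (GO B)) B [Inl eps]" using ea ed ec assms(7) by simp
  have r2: "zz_rel D (FO A) B ([] @ [Inl (FA f)] @ [Inl eps]) ([] @ [Inl (FA g)] @ [Inl eps])"
    by (rule zz_rel.zz_ctx[OF r1 p0 p1])
  have c1: "zz_rel D (FO A) B [Inl (FA f), Inl eps] [Inl fbar]"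
    using zz_rel.zz_comp[of "FA f" D eps] ff ea ed ec efb by simp
  have c2: "zz_rel D (FO A) B [Inl (FA g), Inl eps] [Inl gbar]"
    using zz_rel.zz_comp[of "FA g" D eps] ff ea ed ec egb by simp
  have "zz_rel D (FO A) B [Inl fbar] [Inl gbar]"
    using zz_rel.zz_trans[OF zz_rel.zz_sym[OF c1] zz_rel.zz_trans[OF r2[simplified] c2]] .
  then show ?thesis using assms(11,13) unfolding homotopic_def hom_def by auto
qed

end
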